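(* Let $f,g_1,\ldots,g_m\in\mathbb R[\mathbf x]$, $\mathbf x=(x_1,\ldots,x_n)$, satisfy the Sparsity Assumption and the Compactness/Generation Assumption (a) below, and let $\mathbf K=\{\mathbf x\in\mathbb R^n: 0\le g_j(\mathbf x)\le 1,\ j=1,\ldots,m\}$. If $f(\mathbf x)>0$ for all $\mathbf x\in\mathbf K$, then there exist polynomials $f^\ell\in\mathbb R[\mathbf x;I_\ell]$, $\ell=1,\ldots,p$, with $f=\sum_{\ell=1}^p f^\ell$, and for each $\ell$ finitely many positive reals $c^\ell_{\alpha\beta}$, $(\alpha,\beta)\in N^\ell$, such that \[ f^\ell=\sum_{(\alpha,\beta)\in N^\ell} c^\ell_{\alpha\beta}\,h_{\alpha\beta},\qquad \ell=1,\ldots,p. \]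
   Context: For $I\subseteq\{1,\ldots,n\}$, $\mathbb R[\mathbf x;I]$ denotes the subring of $\mathbb R[\mathbf x]$ of polynomials in the variables $\{x_i:i\in I\}$ only. For $\alpha,\beta\in\mathbb N_0^m$, $h_{\alpha\beta}:=\prod_{j=1}^m g_j^{\alpha_j}(1-g_j)^{\beta_j}$. For $\alpha\in\mathbb N_0^m$, $\mathrm{supp}(\alpha)=\{j:\alpha_j\neq 0\}$. Sparsity Assumption: there are $p\in\mathbb N$ and sets $I_\ell\subseteq\{1,\ldots,n\}$, $J_\ell\subseteq\{1,\ldots,m\}$ ($\ell=1,\ldots,p$) such that: $f=\sum_{\ell=1}^p f^\ell$ for some $f^\ell\in\mathbb R[\mathbf x;I_\ell]$; $g_j\in\mathbb R[\mathbf x;I_\ell]$ for all $j\in J_\ell$; $\bigcup_\ell I_\ell=\{1,\ldots,n\}$; $\bigcup_\ell J_\ell=\{1,\ldots,m\}$; and (running intersection property) for every $\ell=1,\ldots,p-1$ there is $s\le \ell$ with $I_{\ell+1}\cap\bigcup_{r=1}^{\ell}I_r\subseteq I_s$. With $n_\ell=|I_\ell|$, let $\mathbf K_\ell=\{\mathbf z\in\mathbb R^{n_\ell}:0\le g_j(\mathbf z)\le 1,\ j\in J_\ell\}$ (each $g_j$, $j\in J_\ell$, viewed as a function of the variables indexed by $I_\ell$). Compactness/Generation Assumption (a): for each $\ell$, $\mathbf K_\ell$ is compact and the polynomials $1$ and $(g_j)_{j\in J_\ell}$ generate $\mathbb R[\mathbf x;I_\ell]$ as an $\mathbb R$-algebra.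 $N^\ell:=\{(\alpha,\beta)\in\mathbb N_0^m\times\mathbb N_0^m:\mathrm{supp}(\alpha)\cup\mathrm{supp}(\beta)\subseteq J_\ell\}$. *)

theory Defs
  imports "HOL-Analysis.Analysis"
begin

(* Points of R^n are represented as functions nat => real (coordinates x 1, ..., x n);
   polynomials are represented by the polynomial functions they induce
   (the map R[x] -> functions is injective since R is infinite). *)

type_synonym pt = "nat \<Rightarrow> real"

inductive_set alg_gen :: "(pt \<Rightarrow> real) set \<Rightarrow> (pt \<Rightarrow> real) set"
  for G :: "(pt \<Rightarrow> real) set" where
  const: "(\<lambda>x. c) \<in> alg_gen G"
| gen: "q \<in> G \<Longrightarrow> q \<in> alg_gen G"
| add: "p \<in> alg_gen G \<Longrightarrow> q \<in> alg_gen G \<Longrightarrow> (\<lambda>x. p x + q x) \<in> alg_gen G"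
| mult: "p \<in> alg_gen G \<Longrightarrow> q \<in> alg_gen G \<Longrightarrow> (\<lambda>x. p x * q x) \<in> alg_gen G"

definition poly_in :: "nat set \<Rightarrow> (pt \<Rightarrow> real) set" where
  "poly_in I = alg_gen ((\<lambda>i. \<lambda>x. x i) ` I)"

definition h_ab :: "nat \<Rightarrow> (nat \<Rightarrow> pt \<Rightarrow> real) \<Rightarrow> (nat \<Rightarrow> nat) \<Rightarrow> (nat \<Rightarrow> nat) \<Rightarrow> pt \<Rightarrow> real" where
  "h_ab m g \<alpha> \<beta> x = (\<Prod>j\<in>{1..m}. g j x ^ \<alpha> j * (1 - g j x) ^ \<beta> j)"

definition supp_idx :: "(nat \<Rightarrow> nat) \<Rightarrow> nat set" where
  "supp_idx \<alpha> = {j. \<alpha> j \<noteq> 0}"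

definition N_set :: "nat set \<Rightarrow> ((nat \<Rightarrow> nat) \<times> (nat \<Rightarrow> nat)) set" where
  "N_set J = {(\<alpha>, \<beta>). supp_idx \<alpha> \<union> supp_idx \<beta> \<subseteq> J}"

(* K_l, viewed inside R^n with coordinates outside I_l set to 0 (homeomorphic to the
   subset of R^{n_l}) *)
definition K_loc :: "nat set \<Rightarrow> nat set \<Rightarrow> (nat \<Rightarrow> pt \<Rightarrow> real) \<Rightarrow> pt set" where
  "K_loc I J g = {z. (\<forall>i. i \<notin> I \<longrightarrow> z i = 0) \<and> (\<forall>j\<in>J. 0 \<le> g j z \<and> g j z \<le> 1)}"

definition K_glob :: "nat \<Rightarrow> nat \<Rightarrow> (nat \<Rightarrow> pt \<Rightarrow> real) \<Rightarrow> pt set" where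
  "K_glob n m g = {x. (\<forall>i. i \<notin> {1..n} \<longrightarrow> x i = 0) \<and> (\<forall>j\<in>{1..m}. 0 \<le> g j x \<and> g j x \<le> 1)}"

end

theory Submission
  imports Defs
begin


lemma box_compact:
  fixes S :: "nat \<Rightarrow> real set"
  assumes "\<And>i. compact (S i)"
  shows "compact {x::pt. \<forall>i. x i \<in> S i}"
proof -
  have "compactin (product_topology (\<lambda>i. euclidean) UNIV) (PiE UNIV S)"
    using assms by (simp add: compactin_PiE)
  moreover have "PiE UNIV S = {x::pt. \<forall>i. x i \<in> S i}" by (auto simp: PiE_def Pi_def)
  ultimately show ?thesis by (simp add: euclidean_product_topology)
qed

definition restr :: "nat set \<Rightarrow> pt \<Rightarrow> pt" where
  "restr A x = (\<lambda>i. if i \<in> A then x i else 0)"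

lemma restr_cont: "continuous_on UNIV (restr A)"
  unfolding restr_def
proof (intro continuous_on_coordinatewise_then_product)
  fix i show "continuous_on UNIV (\<lambda>x::pt. if i \<in> A then x i else 0)"
    by (cases "i \<in> A") auto
qed

lemma alg_gen_mono: "G \<subseteq> H \<Longrightarrow> alg_gen G \<subseteq> alg_gen H"
proof
  fix q assume GH: "G \<subseteq> H" and "q \<in> alg_gen G" 
  from this(2) show "q \<in> alg_gen H"
    by (induction rule: alg_gen.induct) (use GH in \<open>auto intro: alg_gen.intros\<close>)
qed

lemma poly_in_mono: "A \<subseteq> B \<Longrightarrow> poly_in A \<subseteq> poly_in B"
  unfolding poly_in_def by (rule alg_gen_mono) auto

lemma poly_coord: "i \<in> A \<Longrightarrow> (\<lambda>x. x i) \<in> poly_in A"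
  unfolding poly_in_def by (rule alg_gen.gen) auto

lemma alg_gen_scale: "p \<in> alg_gen G \<Longrightarrow> (\<lambda>x. c * p x) \<in> alg_gen G"
  using alg_gen.mult[OF alg_gen.const] by blast

lemma alg_gen_diff: "p \<in> alg_gen G \<Longrightarrow> q \<in> alg_gen G \<Longrightarrow> (\<lambda>x. p x - q x) \<in> alg_gen G"
proof -
  assume "p \<in> alg_gen G" "q \<in> alg_gen G"
  then have "(\<lambda>x. p x + (-1) * q x) \<in> alg_gen G" by (intro alg_gen.add alg_gen_scale)
  then show ?thesis by simp
qed

lemma alg_gen_sum: "finite S \<Longrightarrow> (\<And>s. s \<in> S \<Longrightarrow> F s \<in> alg_gen G) \<Longrightarrow> (\<lambda>x. \<Sum>s\<in>S. F s x) \<in> alg_gen G"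
proof (induction S rule: finite_induct)
  case empty then show ?case using alg_gen.const[of 0] by simp
next
  case (insert a S) then show ?case using alg_gen.add[of "F a" G "\<lambda>x. \<Sum>s\<in>S. F s x"] by simp
qed

lemma alg_gen_pow: "p \<in> alg_gen G \<Longrightarrow> (\<lambda>x. p x ^ k) \<in> alg_gen G"
proof (induction k)
  case 0 then show ?case using alg_gen.const[of 1] by simp
next
  case (Suc k) then show ?case using alg_gen.mult[of p G "\<lambda>x. p x ^ k"] by simp
qed

lemma poly_dep: "q \<in> poly_in A \<Longrightarrow> (\<And>i. i \<in> A \<Longrightarrow> x i = y i) \<Longrightarrow> q x = q y"
  unfolding poly_in_def
  by (induction rule: alg_gen.induct) auto

lemma poly_restr: "q \<in> poly_in A \<Longrightarrow> q (restr A x) = q x"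
  by (rule poly_dep) (auto simp: restr_def)

lemma alg_gen_cont: "q \<in> alg_gen G \<Longrightarrow> (\<And>p. p \<in> G \<Longrightarrow> continuous_on S p) \<Longrightarrow> continuous_on S q"
  by (induction rule: alg_gen.induct) (auto intro!: continuous_intros)

lemma poly_cont: "q \<in> poly_in A \<Longrightarrow> continuous_on S q"
  unfolding poly_in_def
  by (erule alg_gen_cont) (auto intro: continuous_on_subset[OF continuous_on_product_coordinates])



definition qc :: "nat \<Rightarrow> nat \<Rightarrow> nat \<Rightarrow> real" where
  "qc d i a = real (i choose a) / real (d choose a)"

lemma choose_step: "(i choose Suc a) * Suc a = (i choose a) * (i - a)"
  by (metis binomial_absorb_comp binomial_absorption mult.commute)

lemma qc_step:
  assumes "a < d"
  shows "qc d i (Suc a) = qc d i a * ((real i - real a) / (real d - real a))"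
proof (cases "a \<le> i")
  case True
  have e1: "real (i choose Suc a) * real (Suc a) = real (i choose a) * (real i - real a)"
    using choose_step[of i a] True by (metis of_nat_diff of_nat_mult)
  have e2: "real (d choose Suc a) * real (Suc a) = real (d choose a) * (real d - real a)"
    using choose_step[of d a] assms by (metis less_imp_le of_nat_diff of_nat_mult)
  have pos: "real (d choose a) > 0" "real d - real a > 0" using assms by auto
  have "qc d i (Suc a) = (real (i choose Suc a) * real (Suc a)) / (real (d choose Suc a) * real (Suc a))"
    unfolding qc_def by simp
  also have "\<dots> = (real (i choose a) * (real i - real a)) / (real (d choose a) * (real d - real a))"
    using e1 e2 by simp
  finally show ?thesis unfolding qc_def by simp
next
  case False
  then have "i < a" by simp
  then have z: "(i choose a) = 0" "(i choose Suc a) = 0" by auto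
  show ?thesis unfolding qc_def z by simp
qed

lemma qc_bound:
  assumes "a \<le> d" "i \<le> d" "0 < d"
  shows "0 \<le> qc d i a \<and> qc d i a \<le> 1 \<and> \<bar>qc d i a - (real i / real d) ^ a\<bar> \<le> real a ^ 2 / real d"
  using assms(1)
proof (induction a)
  case 0
  then show ?case by (simp add: qc_def)
next
  case (Suc a)
  then have ad: "a < d" by simp
  from Suc have IH: "0 \<le> qc d i a" "qc d i a \<le> 1" "\<bar>qc d i a - (real i / real d) ^ a\<bar> \<le> real a ^ 2 / real d" by auto
  define u where "u = qc d i a"
  define v where "v = (real i / real d) ^ a"
  define s where "s = (real i - real a) / (real d - real a)"
  define w where "w = real i / real d"
  have w01: "0 \<le> w" "w \<le> 1" using assms unfolding w_def by auto
  have v0: "0 \<le> v" unfolding v_def by simp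
  have eq: "qc d i (Suc a) = u * s" "(real i / real d) ^ Suc a = v * w"
    using qc_step[OF ad] unfolding u_def s_def v_def w_def by auto
  have bnd: "real a ^ 2 / real d + real a / real d \<le> real (Suc a) ^ 2 / real d"
    using assms by (simp add: divide_simps power2_eq_square algebra_simps)
  show ?case
  proof (cases "u = 0")
    case True
    have "v \<le> real a ^ 2 / real d" using IH True unfolding u_def v_def by simp
    moreover have "v * w \<le> v" using w01 v0 by (simp add: mult_left_le)
    moreover have "real a ^ 2 / real d \<le> real (Suc a) ^ 2 / real d"
      using assms by (simp add: divide_simps power_mono)
    ultimately show ?thesis using eq True v0 w01 by simp
  next
    case False
    then have "(i choose a) \<noteq> 0" unfolding u_def qc_def by auto
    then have ai: "a \<le> i" by (simp add: binomial_eq_0_iff)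
    have dpos: "real d - real a > 0" using ad by simp
    have s01: "0 \<le> s" "s \<le> 1" unfolding s_def using ai assms dpos by (auto simp: divide_simps)
    have sw: "s - w = - (real a * (real d - real i)) / ((real d - real a) * real d)"
      unfolding s_def w_def using dpos assms by (simp add: divide_simps) (simp add: algebra_simps)
    have "\<bar>s - w\<bar> = (real a * (real d - real i)) / ((real d - real a) * real d)"
      using sw dpos assms by (simp add: abs_div)
    also have "\<dots> \<le> (real a * (real d - real a)) / ((real d - real a) * real d)"
      using dpos assms ai by (intro divide_right_mono mult_left_mono) auto
    also have "\<dots> = real a / real d" using dpos by simp
    finally have swb: "\<bar>s - w\<bar> \<le> real a / real d" .
    have "\<bar>u * s - v * w\<bar> = \<bar>u * (s - w) + (u - v) * w\<bar>" by (simp add: algebra_simps)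
    also have "\<dots> \<le> u * \<bar>s - w\<bar> + \<bar>u - v\<bar> * w"
      using IH w01 unfolding u_def by (simp add: abs_mult abs_triangle_ineq order_trans[OF abs_triangle_ineq])
    also have "\<dots> \<le> 1 * (real a / real d) + (real a ^ 2 / real d) * 1"
      using IH w01 swb unfolding u_def v_def
      by (intro add_mono mult_mono) auto
    finally have "\<bar>u * s - v * w\<bar> \<le> real (Suc a) ^ 2 / real d" using bnd by simp
    moreover have "0 \<le> u * s" "u * s \<le> 1" using IH s01 unfolding u_def
      by (auto simp: mult_le_one)
    ultimately show ?thesis using eq by simp
  qed
qed

lemma prod_diff_le:
  fixes u v :: "'a \<Rightarrow> real"
  assumes "finite A" "\<And>j. j \<in> A \<Longrightarrow> 0 \<le> u j \<and> u j \<le> 1 \<and> 0 \<le> v j \<and> v j \<le> 1"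
  shows "\<bar>(\<Prod>j\<in>A. u j) - (\<Prod>j\<in>A. v j)\<bar> \<le> (\<Sum>j\<in>A. \<bar>u j - v j\<bar>)"
  using assms
proof (induction A rule: finite_induct)
  case empty then show ?case by simp
next
  case (insert a A)
  define U where "U = (\<Prod>j\<in>A. u j)"
  define V where "V = (\<Prod>j\<in>A. v j)"
  have U01: "0 \<le> U" "U \<le> 1" unfolding U_def using insert by (auto intro: prod_nonneg prod_le_1)
  have V01: "0 \<le> V" "V \<le> 1" unfolding V_def using insert by (auto intro: prod_nonneg prod_le_1)
  have ua: "0 \<le> u a" "u a \<le> 1" "0 \<le> v a" "v a \<le> 1" using insert by auto
  have IH: "\<bar>U - V\<bar> \<le> (\<Sum>j\<in>A. \<bar>u j - v j\<bar>)" unfolding U_def V_def using insert by auto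
  have "\<bar>u a * U - v a * V\<bar> = \<bar>u a * (U - V) + (u a - v a) * V\<bar>" by (simp add: algebra_simps)
  also have "\<dots> \<le> u a * \<bar>U - V\<bar> + \<bar>u a - v a\<bar> * V"
    using ua V01 by (simp add: abs_mult order_trans[OF abs_triangle_ineq])
  also have "\<dots> \<le> 1 * \<bar>U - V\<bar> + \<bar>u a - v a\<bar> * 1"
    using ua V01 by (intro add_mono mult_mono) auto
  finally show ?case using insert IH unfolding U_def V_def by simp
qed



lemma bern_uni:
  fixes t :: real
  assumes "a \<le> d"
  shows "t ^ a = (\<Sum>i=0..d. qc d i a * (real (d choose i) * t ^ i * (1 - t) ^ (d - i)))"
proof -
  have Cpos: "real (d choose a) > 0" using assms by simp
  have tm: "qc d i a * (real (d choose i) * t ^ i * (1 - t) ^ (d - i)) =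
       (if a \<le> i then real ((d - a) choose (i - a)) * t ^ i * (1 - t) ^ (d - i) else 0)"
    if "i \<in> {0..d}" for i
  proof (cases "a \<le> i")
    case True
    have "(d choose i) * (i choose a) = (d choose a) * ((d - a) choose (i - a))"
      using choose_mult[OF True] that by auto
    then have "real (d choose i) * real (i choose a) = real (d choose a) * real ((d - a) choose (i - a))"
      by (metis of_nat_mult)
    then show ?thesis using True Cpos unfolding qc_def by (simp add: field_simps)
  next
    case False then show ?thesis unfolding qc_def by simp
  qed
  have "(\<Sum>i=0..d. qc d i a * (real (d choose i) * t ^ i * (1 - t) ^ (d - i)))
      = (\<Sum>i=0..d. (if a \<le> i then real ((d - a) choose (i - a)) * t ^ i * (1 - t) ^ (d - i) else 0))"
    using tm by (rule sum.cong[OF refl])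
  also have "\<dots> = (\<Sum>i=a..d. real ((d - a) choose (i - a)) * t ^ i * (1 - t) ^ (d - i))"
    by (rule sum.mono_neutral_cong_right) (use assms in auto)
  also have "\<dots> = (\<Sum>k=0..d-a. real ((d - a) choose k) * t ^ (k + a) * (1 - t) ^ (d - a - k))"
  proof -
    have "(\<Sum>i=0+a..(d-a)+a. real ((d - a) choose (i - a)) * t ^ i * (1 - t) ^ (d - i))
        = (\<Sum>k=0..d-a. real ((d - a) choose (k + a - a)) * t ^ (k + a) * (1 - t) ^ (d - (k + a)))"
      by (rule sum.shift_bounds_cl_nat_ivl)
    then show ?thesis using assms by (simp add: algebra_simps)
  qed
  also have "\<dots> = t ^ a * (\<Sum>k\<le>d-a. real ((d - a) choose k) * t ^ k * (1 - t) ^ (d - a - k))"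
    by (simp add: sum_distrib_left atLeast0AtMost power_add algebra_simps)
  also have "\<dots> = t ^ a * (t + (1 - t)) ^ (d - a)"
    by (simp only: binomial_ring)
  finally show ?thesis by simp
qed

definition mon :: "nat set \<Rightarrow> (nat \<Rightarrow> nat) \<Rightarrow> pt \<Rightarrow> real" where
  "mon J e y = (\<Prod>j\<in>J. y j ^ e j)"

definition basis :: "nat set \<Rightarrow> nat \<Rightarrow> (nat \<Rightarrow> nat) \<Rightarrow> pt \<Rightarrow> real" where
  "basis J d i y = (\<Prod>j\<in>J. real (d choose i j) * y j ^ i j * (1 - y j) ^ (d - i j))"

lemma bern_multi:
  assumes "finite J" "\<And>j. j \<in> J \<Longrightarrow> e j \<le> d"
  shows "mon J e y = (\<Sum>i\<in>PiE J (\<lambda>_. {0..d}). (\<Prod>j\<in>J. qc d (i j) (e j)) * basis J d i y)"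
proof -
  have "mon J e y = (\<Prod>j\<in>J. \<Sum>k\<in>{0..d}. qc d k (e j) * (real (d choose k) * y j ^ k * (1 - y j) ^ (d - k)))"
    unfolding mon_def using assms by (intro prod.cong refl bern_uni) auto
  also have "\<dots> = (\<Sum>i\<in>PiE J (\<lambda>_. {0..d}). \<Prod>j\<in>J. qc d (i j) (e j) * (real (d choose i j) * y j ^ i j * (1 - y j) ^ (d - i j)))"
    using assms by (subst prod_sum_PiE) auto
  also have "\<dots> = (\<Sum>i\<in>PiE J (\<lambda>_. {0..d}). (\<Prod>j\<in>J. qc d (i j) (e j)) * basis J d i y)"
    unfolding basis_def by (simp add: prod.distrib mult.assoc)
  finally show ?thesis .
qed

lemma sum_list_product:
  fixes f g :: "'a \<Rightarrow> real"
  shows "(\<Sum>x\<leftarrow>xs. f x) * (\<Sum>y\<leftarrow>ys. g y) = (\<Sum>p\<leftarrow>List.product xs ys. f (fst p) * g (snd p))"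
  by (induction xs) (auto simp: sum_list_const_mult algebra_simps o_def)

lemma poly_mon_repr:
  assumes "F \<in> poly_in J" and finJ: "finite J"
  shows "\<exists>L. \<forall>y. F y = (\<Sum>p\<leftarrow>L. fst p * mon J (snd p) y)"
  using assms unfolding poly_in_def
proof (induction rule: alg_gen.induct)
  case (const c)
  show ?case by (rule exI[of _ "[(c, \<lambda>_. 0)]"]) (simp add: mon_def)
next
  case (gen q)
  then obtain i where i: "i \<in> J" "q = (\<lambda>x. x i)" by auto
  have "mon J (\<lambda>j. if j = i then 1 else 0) y = y i" for y
  proof -
    have "mon J (\<lambda>j. if j = i then 1 else 0) y = (\<Prod>j\<in>J. if j = i then y j else 1)"
      unfolding mon_def by (rule prod.cong) auto
    also have "\<dots> = y i" using i(1) finJ by (simp add: prod.delta')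
    finally show ?thesis .
  qed
  then show ?case using i by (intro exI[of _ "[(1, \<lambda>j. if j = i then 1 else 0)]"]) simp
next
  case (add p q)
  then obtain L1 L2 where "\<forall>y. p y = (\<Sum>p\<leftarrow>L1. fst p * mon J (snd p) y)" "\<forall>y. q y = (\<Sum>p\<leftarrow>L2. fst p * mon J (snd p) y)"
    by blast
  then show ?case by (intro exI[of _ "L1 @ L2"]) simp
next
  case (mult p q)
  then obtain L1 L2 where L: "\<forall>y. p y = (\<Sum>p\<leftarrow>L1. fst p * mon J (snd p) y)" "\<forall>y. q y = (\<Sum>p\<leftarrow>L2. fst p * mon J (snd p) y)"
    by blast
  define L where "L = map (\<lambda>pq. (fst (fst pq) * fst (snd pq), \<lambda>j. snd (fst pq) j + snd (snd pq) j)) (List.product L1 L2)"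
  have "p y * q y = (\<Sum>pr\<leftarrow>L. fst pr * mon J (snd pr) y)" for y
  proof -
    have "p y * q y = (\<Sum>pq\<leftarrow>List.product L1 L2. (fst (fst pq) * mon J (snd (fst pq)) y) * (fst (snd pq) * mon J (snd (snd pq)) y))"
      using L by (simp add: sum_list_product)
    also have "\<dots> = (\<Sum>pr\<leftarrow>L. fst pr * mon J (snd pr) y)"
      unfolding L_def by (simp add: o_def mon_def power_add prod.distrib algebra_simps)
    finally show ?thesis .
  qed
  then show ?case by blast
qed



definition cube :: "nat set \<Rightarrow> pt set" where
  "cube J = {y. \<forall>j. y j \<in> (if j \<in> J then {0..1} else {0})}"

lemma cube_compact: "compact (cube J)"
  unfolding cube_def by (rule box_compact) auto

lemma sum_list_sum_swap:
  fixes f :: "'a \<Rightarrow> 'b \<Rightarrow> real"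
  shows "(\<Sum>p\<leftarrow>L. \<Sum>i\<in>A. f p i) = (\<Sum>i\<in>A. \<Sum>p\<leftarrow>L. f p i)"
  by (induction L) (auto simp: sum.distrib)

lemma sum_list_abs_le:
  fixes f :: "'a \<Rightarrow> real"
  shows "\<bar>\<Sum>p\<leftarrow>L. f p\<bar> \<le> (\<Sum>p\<leftarrow>L. \<bar>f p\<bar>)"
  by (induction L) (auto intro: order_trans[OF abs_triangle_ineq])

lemma sum_list_div:
  fixes f :: "'a \<Rightarrow> real"
  shows "(\<Sum>p\<leftarrow>L. f p / c) = (\<Sum>p\<leftarrow>L. f p) / c"
  by (induction L) (auto simp: add_divide_distrib)

lemma cube_repr:
  assumes finJ: "finite J" and FJ: "F \<in> poly_in J" and Fpos: "\<forall>y\<in>cube J. F y > 0"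
  shows "\<exists>S c. finite S \<and> S \<subseteq> N_set J \<and> (\<forall>ab\<in>S. c ab > 0) \<and>
     (\<forall>y. F y = (\<Sum>ab\<in>S. c ab * (\<Prod>j\<in>J. y j ^ fst ab j * (1 - y j) ^ snd ab j)))"
proof -
  obtain L where L: "\<forall>y. F y = (\<Sum>p\<leftarrow>L. fst p * mon J (snd p) y)"
    using poly_mon_repr[OF FJ finJ] by blast
  have cne: "(\<lambda>_. 0) \<in> cube J" unfolding cube_def by auto
  obtain y0 where y0: "y0 \<in> cube J" "\<forall>y\<in>cube J. F y0 \<le> F y"
    using continuous_attains_inf[OF cube_compact, of J F] cne poly_cont[OF FJ] by blast
  define \<epsilon> where "\<epsilon> = F y0"
  have epos: "\<epsilon> > 0" using Fpos y0 unfolding \<epsilon>_def by auto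
  have Fge: "\<And>y. y \<in> cube J \<Longrightarrow> F y \<ge> \<epsilon>" using y0 unfolding \<epsilon>_def by auto
  define D where "D = (\<Sum>p\<leftarrow>L. \<Sum>j\<in>J. snd p j)"
  have Dbnd: "snd p j \<le> D" if "p \<in> set L" "j \<in> J" for p j
  proof -
    have "snd p j \<le> (\<Sum>j\<in>J. snd p j)" using that finJ by (intro member_le_sum) auto
    also have "\<dots> \<le> D" unfolding D_def
      using member_le_sum_list[of "sum (snd p) J" "map (\<lambda>p. sum (snd p) J) L"] that(1) by auto
    finally show ?thesis .
  qed
  define Cst where "Cst = (\<Sum>p\<leftarrow>L. \<bar>fst p\<bar> * (\<Sum>j\<in>J. real (snd p j) ^ 2))"
  define d where "d = D + 1 + nat \<lceil>Cst / \<epsilon>\<rceil>"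
  have dpos: "0 < d" and dD: "D \<le> d" unfolding d_def by auto
  have dC: "Cst / real d < \<epsilon>"
  proof -
    have "Cst / \<epsilon> < real d" unfolding d_def by linarith
    then have "Cst < real d * \<epsilon>" using epos by (simp add: divide_simps)
    then show ?thesis using dpos by (simp add: divide_simps mult.commute)
  qed
  define box where "box = PiE J (\<lambda>_. {0..d})"
  have finbox: "finite box" unfolding box_def using finJ by (simp add: finite_PiE)
  define bc where "bc i = (\<Sum>p\<leftarrow>L. fst p * (\<Prod>j\<in>J. qc d (i j) (snd p j)))" for i
  have Frep: "F y = (\<Sum>i\<in>box. bc i * basis J d i y)" for y
  proof -
    have "F y = (\<Sum>p\<leftarrow>L. fst p * mon J (snd p) y)" using L by simp
    also have "\<dots> = (\<Sum>p\<leftarrow>L. fst p * (\<Sum>i\<in>box. (\<Prod>j\<in>J. qc d (i j) (snd p j)) * basis J d i y))"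
      unfolding box_def
      by (intro arg_cong[where f = sum_list] map_cong refl arg_cong2[where f = "(*)"] bern_multi finJ)
        (use Dbnd dD in force)
    also have "\<dots> = (\<Sum>p\<leftarrow>L. \<Sum>i\<in>box. fst p * (\<Prod>j\<in>J. qc d (i j) (snd p j)) * basis J d i y)"
      by (simp add: sum_distrib_left mult.assoc)
    also have "\<dots> = (\<Sum>i\<in>box. \<Sum>p\<leftarrow>L. fst p * (\<Prod>j\<in>J. qc d (i j) (snd p j)) * basis J d i y)"
      by (rule sum_list_sum_swap)
    also have "\<dots> = (\<Sum>i\<in>box. bc i * basis J d i y)"
      unfolding bc_def by (simp add: sum_list_mult_const)
    finally show ?thesis .
  qed
  have bcpos: "bc i > 0" if "i \<in> box" for i
  proof -
    have id: "i j \<le> d" if "j \<in> J" for j using \<open>i \<in> box\<close> that unfolding box_def by auto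
    define \<xi> where "\<xi> = (\<lambda>j. if j \<in> J then real (i j) / real d else 0)"
    have xic: "\<xi> \<in> cube J" unfolding cube_def \<xi>_def using id dpos by auto
    have Fxi: "F \<xi> = (\<Sum>p\<leftarrow>L. fst p * (\<Prod>j\<in>J. (real (i j) / real d) ^ snd p j))"
      unfolding L[rule_format] mon_def \<xi>_def by (intro arg_cong[where f = sum_list] map_cong refl arg_cong2[where f = "(*)"] prod.cong) auto
    have "\<bar>bc i - F \<xi>\<bar> = \<bar>\<Sum>p\<leftarrow>L. fst p * ((\<Prod>j\<in>J. qc d (i j) (snd p j)) - (\<Prod>j\<in>J. (real (i j) / real d) ^ snd p j))\<bar>"
      unfolding bc_def Fxi by (simp add: sum_list_subtractf[symmetric] algebra_simps)
    also have "\<dots> \<le> (\<Sum>p\<leftarrow>L. \<bar>fst p * ((\<Prod>j\<in>J. qc d (i j) (snd p j)) - (\<Prod>j\<in>J. (real (i j) / real d) ^ snd p j))\<bar>)"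
      by (rule sum_list_abs_le)
    also have "\<dots> \<le> (\<Sum>p\<leftarrow>L. \<bar>fst p\<bar> * (\<Sum>j\<in>J. real (snd p j) ^ 2) / real d)"
    proof (rule sum_list_mono)
      fix p assume p: "p \<in> set L"
      have "\<bar>(\<Prod>j\<in>J. qc d (i j) (snd p j)) - (\<Prod>j\<in>J. (real (i j) / real d) ^ snd p j)\<bar>
          \<le> (\<Sum>j\<in>J. \<bar>qc d (i j) (snd p j) - (real (i j) / real d) ^ snd p j\<bar>)"
      proof (rule prod_diff_le[OF finJ])
        fix j assume j: "j \<in> J"
        have "snd p j \<le> d" using Dbnd[OF p j] dD by simp
        then have "0 \<le> qc d (i j) (snd p j) \<and> qc d (i j) (snd p j) \<le> 1"
          using qc_bound[of "snd p j" d "i j"] id[OF j] dpos by auto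
        moreover have "0 \<le> (real (i j) / real d) ^ snd p j" "(real (i j) / real d) ^ snd p j \<le> 1"
          using id[OF j] dpos by (auto intro!: power_le_one power_mono simp: divide_simps)
        ultimately show "0 \<le> qc d (i j) (snd p j) \<and> qc d (i j) (snd p j) \<le> 1 \<and>
            0 \<le> (real (i j) / real d) ^ snd p j \<and> (real (i j) / real d) ^ snd p j \<le> 1" by auto
      qed
      also have "\<dots> \<le> (\<Sum>j\<in>J. real (snd p j) ^ 2 / real d)"
      proof (rule sum_mono)
        fix j assume j: "j \<in> J"
        have "snd p j \<le> d" using Dbnd[OF p j] dD by simp
        then show "\<bar>qc d (i j) (snd p j) - (real (i j) / real d) ^ snd p j\<bar> \<le> real (snd p j) ^ 2 / real d"
          using qc_bound[of "snd p j" d "i j"] id[OF j] dpos by auto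
      qed
      also have "\<dots> = (\<Sum>j\<in>J. real (snd p j) ^ 2) / real d" by (simp add: sum_divide_distrib)
      finally have "\<bar>(\<Prod>j\<in>J. qc d (i j) (snd p j)) - (\<Prod>j\<in>J. (real (i j) / real d) ^ snd p j)\<bar>
          \<le> (\<Sum>j\<in>J. real (snd p j) ^ 2) / real d" .
      then show "\<bar>fst p * ((\<Prod>j\<in>J. qc d (i j) (snd p j)) - (\<Prod>j\<in>J. (real (i j) / real d) ^ snd p j))\<bar>
          \<le> \<bar>fst p\<bar> * (\<Sum>j\<in>J. real (snd p j) ^ 2) / real d"
        by (simp add: abs_mult mult_left_mono times_divide_eq_right[symmetric] del: times_divide_eq_right)
    qed
    also have "\<dots> = Cst / real d" unfolding Cst_def by (simp add: sum_list_div)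
    finally have "\<bar>bc i - F \<xi>\<bar> \<le> Cst / real d" .
    then show ?thesis using Fge[OF xic] dC by linarith
  qed
  define ext where "ext i = (\<lambda>j. if j \<in> J then i j else (0::nat))" for i :: "nat \<Rightarrow> nat"
  define pr where "pr i = (ext i, ext (\<lambda>j. d - i j))" for i
  define S where "S = pr ` box"
  define c where "c ab = bc (fst ab) * (\<Prod>j\<in>J. real (d choose fst ab j))" for ab :: "(nat \<Rightarrow> nat) \<times> (nat \<Rightarrow> nat)"
  have bc_ext: "bc (ext i) = bc i" for i
    unfolding bc_def ext_def by (intro arg_cong[where f = sum_list] map_cong refl arg_cong2[where f = "(*)"] prod.cong) auto
  have inj: "inj_on pr box"
  proof (rule inj_onI)
    fix i i' assume ii: "i \<in> box" "i' \<in> box" "pr i = pr i'"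
    then have "ext i = ext i'" unfolding pr_def by simp
    then have "\<forall>j\<in>J. i j = i' j" unfolding ext_def by (metis)
    then show "i = i'" using ii(1,2) unfolding box_def by (auto simp: PiE_def extensional_def fun_eq_iff)
  qed
  have "finite S" unfolding S_def using finbox by simp
  moreover have "S \<subseteq> N_set J"
    unfolding S_def N_set_def pr_def ext_def supp_idx_def by (auto split: if_splits)
  moreover have "\<forall>ab\<in>S. c ab > 0"
  proof
    fix ab assume "ab \<in> S"
    then obtain i where i: "i \<in> box" "ab = pr i" unfolding S_def by auto
    have "(\<Prod>j\<in>J. real (d choose ext i j)) > 0"
      using i(1) unfolding box_def ext_def by (intro prod_pos) auto
    then show "c ab > 0" unfolding c_def using i bcpos[OF i(1)] bc_ext by (simp add: pr_def)
  qed
  moreover have "\<forall>y. F y = (\<Sum>ab\<in>S. c ab * (\<Prod>j\<in>J. y j ^ fst ab j * (1 - y j) ^ snd ab j))"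
  proof
    fix y
    have "(\<Sum>ab\<in>S. c ab * (\<Prod>j\<in>J. y j ^ fst ab j * (1 - y j) ^ snd ab j))
        = (\<Sum>i\<in>box. c (pr i) * (\<Prod>j\<in>J. y j ^ fst (pr i) j * (1 - y j) ^ snd (pr i) j))"
      unfolding S_def by (rule sum.reindex[OF inj, unfolded o_def])
    also have "\<dots> = (\<Sum>i\<in>box. bc i * basis J d i y)"
    proof (rule sum.cong[OF refl])
      fix i assume "i \<in> box"
      have "c (pr i) * (\<Prod>j\<in>J. y j ^ fst (pr i) j * (1 - y j) ^ snd (pr i) j)
          = bc i * ((\<Prod>j\<in>J. real (d choose i j)) * (\<Prod>j\<in>J. y j ^ i j * (1 - y j) ^ (d - i j)))"
        unfolding c_def pr_def using bc_ext by (simp add: ext_def)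
      also have "\<dots> = bc i * basis J d i y"
        unfolding basis_def by (simp add: prod.distrib[symmetric] mult.assoc)
      finally show "c (pr i) * (\<Prod>j\<in>J. y j ^ fst (pr i) j * (1 - y j) ^ snd (pr i) j) = bc i * basis J d i y" .
    qed
    finally show "F y = (\<Sum>ab\<in>S. c ab * (\<Prod>j\<in>J. y j ^ fst ab j * (1 - y j) ^ snd ab j))"
      using Frep by simp
  qed
  ultimately show ?thesis by blast
qed



lemma subst_gen:
  assumes "q \<in> alg_gen (g ` J)"
  shows "\<exists>F\<in>poly_in J. \<forall>x. q x = F (\<lambda>j. g j x)"
  using assms
proof (induction rule: alg_gen.induct)
  case (const c) then show ?case unfolding poly_in_def by (intro bexI[of _ "\<lambda>_. c"]) (auto intro: alg_gen.const)
next
  case (gen q)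
  then obtain j where "j \<in> J" "q = g j" by auto
  then show ?case by (intro bexI[of _ "\<lambda>y. y j"]) (auto intro: poly_coord)
next
  case (add p q)
  then obtain F1 F2 where "F1 \<in> poly_in J" "F2 \<in> poly_in J" "\<forall>x. p x = F1 (\<lambda>j. g j x)" "\<forall>x. q x = F2 (\<lambda>j. g j x)" by blast
  then show ?case unfolding poly_in_def by (intro bexI[of _ "\<lambda>y. F1 y + F2 y"]) (auto intro: alg_gen.add)
next
  case (mult p q)
  then obtain F1 F2 where "F1 \<in> poly_in J" "F2 \<in> poly_in J" "\<forall>x. p x = F1 (\<lambda>j. g j x)" "\<forall>x. q x = F2 (\<lambda>j. g j x)" by blast
  then show ?case unfolding poly_in_def by (intro bexI[of _ "\<lambda>y. F1 y * F2 y"]) (auto intro: alg_gen.mult)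
qed

lemma poly_comp:
  assumes "q \<in> poly_in I" "\<And>i. i \<in> I \<Longrightarrow> P i \<in> poly_in J"
  shows "(\<lambda>y. q (\<lambda>i. if i \<in> I then P i y else 0)) \<in> poly_in J"
  using assms(1) unfolding poly_in_def
proof (induction rule: alg_gen.induct)
  case (const c) then show ?case by (rule alg_gen.const)
next
  case (gen q)
  then obtain i where "i \<in> I" "q = (\<lambda>x. x i)" by auto
  then show ?case using assms(2)[of i] unfolding poly_in_def by simp
next
  case (add p q) then show ?case using alg_gen.add[OF add.IH] by simp
next
  case (mult p q) then show ?case using alg_gen.mult[OF mult.IH] by simp
qed

lemma dense_local:
  fixes f :: "pt \<Rightarrow> real"
  assumes finJ: "finite J" and Jm: "J \<subseteq> {1..m}"
    and gI: "\<forall>j\<in>J. g j \<in> poly_in I"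
    and gen: "poly_in I \<subseteq> alg_gen (g ` J)"
    and fI: "f \<in> poly_in I"
    and fpos: "\<forall>x\<in>K_loc I J g. f x > 0"
  shows "\<exists>S c. finite S \<and> S \<subseteq> N_set J \<and> (\<forall>ab\<in>S. c ab > 0) \<and>
           f = (\<lambda>x. \<Sum>ab\<in>S. c ab * h_ab m g (fst ab) (snd ab) x)"
proof -
  define Gm where "Gm x = (\<lambda>j. g j x)" for x
  obtain F where FJ: "F \<in> poly_in J" and fF: "\<forall>x. f x = F (Gm x)"
    using subst_gen[of f g J] fI gen unfolding Gm_def by blast
  have "\<forall>i\<in>I. \<exists>Q\<in>poly_in J. \<forall>x. x i = Q (Gm x)"
  proof
    fix i assume "i \<in> I"
    then have "(\<lambda>x. x i) \<in> alg_gen (g ` J)" using gen poly_coord by blast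
    then show "\<exists>Q\<in>poly_in J. \<forall>x. x i = Q (Gm x)" using subst_gen unfolding Gm_def by blast
  qed
  then obtain P where PJ: "\<And>i. i \<in> I \<Longrightarrow> P i \<in> poly_in J" and xP: "\<And>i x. i \<in> I \<Longrightarrow> x i = P i (Gm x)"
    by metis
  define Pm where "Pm y = (\<lambda>i. if i \<in> I then P i y else 0)" for y
  define Pen where "Pen y = (\<Sum>j\<in>J. (y j - g j (Pm y)) ^ 2)" for y
  have PenJ: "Pen \<in> poly_in J"
  proof -
    have "(\<lambda>y. g j (Pm y)) \<in> poly_in J" if "j \<in> J" for j
      unfolding Pm_def using poly_comp[of "g j" I P J] gI that PJ by auto
    then have "(\<lambda>y. (y j - g j (Pm y)) ^ 2) \<in> poly_in J" if "j \<in> J" for j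
      using that poly_coord[OF that] unfolding poly_in_def by (intro alg_gen_pow alg_gen_diff) auto
    then show ?thesis unfolding Pen_def poly_in_def using finJ by (intro alg_gen_sum) auto
  qed
  have Pen0: "Pen (Gm x) = 0" for x
  proof -
    have PG: "Pm (Gm x) i = x i" if "i \<in> I" for i
      unfolding Pm_def using xP[OF that, of x] that by simp
    have "g j (Pm (Gm x)) = g j x" if "j \<in> J" for j
      using poly_dep[of "g j" I "Pm (Gm x)" x] gI that PG by auto
    then show ?thesis unfolding Pen_def by (simp add: Gm_def)
  qed
  have Pen_nn: "Pen y \<ge> 0" for y unfolding Pen_def by (auto intro: sum_nonneg)
  have zero_pen: "F y > 0" if "y \<in> cube J" "Pen y = 0" for y
  proof -
    have "\<forall>j\<in>J. (y j - g j (Pm y)) ^ 2 = 0"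
      using that(2) finJ unfolding Pen_def by (subst (asm) sum_nonneg_eq_0_iff) auto
    then have yj: "\<And>j. j \<in> J \<Longrightarrow> y j = g j (Pm y)" by simp
    have "Pm y \<in> K_loc I J g"
    proof -
      have "0 \<le> y j \<and> y j \<le> 1" if j: "j \<in> J" for j
      proof -
        have "y j \<in> (if j \<in> J then {0..1} else {0})" using \<open>y \<in> cube J\<close> unfolding cube_def by blast
        then show ?thesis using j by simp
      qed
      then have "\<forall>j\<in>J. 0 \<le> g j (Pm y) \<and> g j (Pm y) \<le> 1" using yj by metis
      moreover have "\<forall>i. i \<notin> I \<longrightarrow> Pm y i = 0" unfolding Pm_def by simp
      ultimately show ?thesis unfolding K_loc_def by blast
    qed
    then have "f (Pm y) > 0" using fpos by auto
    moreover have "F (Gm (Pm y)) = F y"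
      using poly_dep[of F J "Gm (Pm y)" y] FJ yj by (auto simp: Gm_def)
    ultimately show ?thesis using fF by simp
  qed
  have "\<exists>N::real. \<forall>y\<in>cube J. F y + N * Pen y > 0"
  proof -
    define Z where "Z = cube J \<inter> {y. F y \<le> 0}"
    have clZ: "closed {y. F y \<le> 0}"
      using poly_cont[OF FJ, of UNIV] by (intro closed_Collect_le) auto
    have cZ: "compact Z" unfolding Z_def using cube_compact clZ by (rule compact_Int_closed)
    show ?thesis
    proof (cases "Z = {}")
      case True
      then show ?thesis unfolding Z_def by (intro exI[of _ 0]) auto
    next
      case False
      obtain z0 where z0: "z0 \<in> Z" "\<forall>z\<in>Z. Pen z0 \<le> Pen z"
        using continuous_attains_inf[OF cZ False] poly_cont[OF PenJ] by blast
      define \<mu> where "\<mu> = Pen z0"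
      have mupos: "\<mu> > 0"
        using zero_pen[of z0] z0(1) Pen_nn[of z0] unfolding \<mu>_def Z_def by force
      have cne: "cube J \<noteq> {}" using False unfolding Z_def by auto
      obtain yb where yb: "yb \<in> cube J" "\<forall>y\<in>cube J. - F y \<le> - F yb"
        using continuous_attains_sup[OF cube_compact cne, of "\<lambda>y. - F y"] poly_cont[OF FJ]
        by (auto intro: continuous_intros)
      define N where "N = (\<bar>F yb\<bar> + 1) / \<mu>"
      have "F y + N * Pen y > 0" if "y \<in> cube J" for y
      proof (cases "F y > 0")
        case True
        moreover have "N \<ge> 0" unfolding N_def using mupos by auto
        ultimately show ?thesis using Pen_nn[of y] by (simp add: add_pos_nonneg)
      next
        case False
        then have "y \<in> Z" unfolding Z_def using that by auto
        then have "\<mu> \<le> Pen y" using z0 unfolding \<mu>_def by auto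
        then have "N * \<mu> \<le> N * Pen y" unfolding N_def using mupos by (intro mult_left_mono) auto
        moreover have "N * \<mu> = \<bar>F yb\<bar> + 1" unfolding N_def using mupos by simp
        moreover have "- F y \<le> \<bar>F yb\<bar>" using yb that by force
        ultimately show ?thesis by linarith
      qed
      then show ?thesis by blast
    qed
  qed
  then obtain N where Npos: "\<forall>y\<in>cube J. F y + N * Pen y > 0" by blast
  define F' where "F' y = F y + N * Pen y" for y
  have F'J: "F' \<in> poly_in J" unfolding F'_def using FJ PenJ unfolding poly_in_def
    by (intro alg_gen.add alg_gen_scale) auto
  have F'f: "f x = F' (Gm x)" for x unfolding F'_def using fF Pen0 by simp
  obtain S c where S: "finite S" "S \<subseteq> N_set J" "\<forall>ab\<in>S. c ab > 0"
    and rep: "\<forall>y. F' y = (\<Sum>ab\<in>S. c ab * (\<Prod>j\<in>J. y j ^ fst ab j * (1 - y j) ^ snd ab j))"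
    using cube_repr[OF finJ F'J] Npos unfolding F'_def by blast
  have "f x = (\<Sum>ab\<in>S. c ab * h_ab m g (fst ab) (snd ab) x)" for x
  proof -
    have "f x = (\<Sum>ab\<in>S. c ab * (\<Prod>j\<in>J. g j x ^ fst ab j * (1 - g j x) ^ snd ab j))"
      using F'f rep by (simp add: Gm_def)
    also have "\<dots> = (\<Sum>ab\<in>S. c ab * h_ab m g (fst ab) (snd ab) x)"
    proof (rule sum.cong[OF refl])
      fix ab assume "ab \<in> S"
      then have "ab \<in> N_set J" using S(2) by auto
      then have sub: "supp_idx (fst ab) \<subseteq> J" "supp_idx (snd ab) \<subseteq> J"
        by (cases ab, simp add: N_set_def)+
      have "(\<Prod>j\<in>{1..m}. g j x ^ fst ab j * (1 - g j x) ^ snd ab j) = (\<Prod>j\<in>J. g j x ^ fst ab j * (1 - g j x) ^ snd ab j)"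
      proof (rule prod.mono_neutral_right)
        show "\<forall>i\<in>{1..m} - J. g i x ^ fst ab i * (1 - g i x) ^ snd ab i = 1"
        proof
          fix i assume "i \<in> {1..m} - J"
          then have "fst ab i = 0" "snd ab i = 0" using sub unfolding supp_idx_def by auto
          then show "g i x ^ fst ab i * (1 - g i x) ^ snd ab i = 1" by simp
        qed
      qed (use Jm in auto)
      then show "c ab * (\<Prod>j\<in>J. g j x ^ fst ab j * (1 - g j x) ^ snd ab j) = c ab * h_ab m g (fst ab) (snd ab) x"
        unfolding h_ab_def by simp
    qed
    finally show ?thesis .
  qed
  then show ?thesis using S by (intro exI[of _ S] exI[of _ c]) auto
qed



lemma restr_image_compact: "compact K \<Longrightarrow> compact (restr C ` K)"
  by (rule compact_continuous_image[OF continuous_on_subset[OF restr_cont]]) auto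

lemma sub_compact:
  assumes "compact K" "continuous_on UNIV (f :: pt \<Rightarrow> real)"
  shows "compact (K \<inter> {x. f x \<le> t})" "compact (K \<inter> {x. t \<le> f x})"
  using assms by (auto intro!: compact_Int_closed closed_Collect_le continuous_on_const)

lemma fiber_compact:
  assumes "compact K"
  shows "compact (K \<inter> {x. restr C x = y})"
  using assms by (intro compact_Int_closed closed_Collect_eq restr_cont continuous_on_const)

lemma choose_t:
  fixes f1 f2 :: "pt \<Rightarrow> real"
  assumes X1: "compact X1" and X2: "compact X2"
    and c1: "continuous_on UNIV f1" and c2: "continuous_on UNIV f2"
    and pos: "\<forall>x\<in>X1. \<forall>z\<in>X2. f1 x + f2 z > 0"
  shows "\<exists>t. (\<forall>x\<in>X1. t < f1 x) \<and> (\<forall>z\<in>X2. - f2 z < t)"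
proof (cases "X1 = {}")
  case True
  show ?thesis
  proof (cases "X2 = {}")
    case True then show ?thesis using \<open>X1 = {}\<close> by auto
  next
    case False
    obtain z0 where "z0 \<in> X2" "\<forall>z\<in>X2. - f2 z \<le> - f2 z0"
      using continuous_attains_sup[OF X2 False, of "\<lambda>z. - f2 z"] c2
      by (auto intro: continuous_intros continuous_on_subset)
    then show ?thesis using \<open>X1 = {}\<close> by (intro exI[of _ "- f2 z0 + 1"]) force
  qed
next
  case False
  obtain x0 where x0: "x0 \<in> X1" "\<forall>x\<in>X1. f1 x0 \<le> f1 x"
    using continuous_attains_inf[OF X1 False, of f1] c1 by (auto intro: continuous_on_subset)
  show ?thesis
  proof (cases "X2 = {}")
    case True then show ?thesis using x0 by (intro exI[of _ "f1 x0 - 1"]) force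
  next
    case False
    obtain z0 where z0: "z0 \<in> X2" "\<forall>z\<in>X2. - f2 z \<le> - f2 z0"
      using continuous_attains_sup[OF X2 False, of "\<lambda>z. - f2 z"] c2
      by (auto intro: continuous_intros continuous_on_subset)
    have "f1 x0 + f2 z0 > 0" using pos x0 z0 by auto
    then show ?thesis using x0 z0
      by (intro exI[of _ "(f1 x0 - f2 z0) / 2"]) force
  qed
qed

lemma local_sep:
  fixes f1 f2 :: "pt \<Rightarrow> real"
  assumes K1: "compact K1" and K2: "compact K2"
    and c1: "continuous_on UNIV f1" and c2: "continuous_on UNIV f2"
    and pos: "\<forall>x\<in>K1. \<forall>z\<in>K2. restr C x = restr C z \<longrightarrow> f1 x + f2 z > 0"
  shows "\<exists>t V. open V \<and> y0 \<in> V \<and> (\<forall>x\<in>K1. restr C x \<in> V \<longrightarrow> t < f1 x) \<and>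
                (\<forall>z\<in>K2. restr C z \<in> V \<longrightarrow> - f2 z < t)"
proof -
  define X1 where "X1 = K1 \<inter> {x. restr C x = y0}"
  define X2 where "X2 = K2 \<inter> {x. restr C x = y0}"
  obtain t where t: "\<forall>x\<in>X1. t < f1 x" "\<forall>z\<in>X2. - f2 z < t"
    using choose_t[of X1 X2 f1 f2] fiber_compact[OF K1] fiber_compact[OF K2] c1 c2 pos
    unfolding X1_def X2_def by force
  define B1 where "B1 = restr C ` (K1 \<inter> {x. f1 x \<le> t})"
  define B2 where "B2 = restr C ` (K2 \<inter> {x. t \<le> - f2 x})"
  have "compact B1" unfolding B1_def by (intro restr_image_compact sub_compact K1 c1)
  moreover have "compact B2" unfolding B2_def
    by (intro restr_image_compact sub_compact K2) (auto intro: continuous_intros c2)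
  ultimately have clB: "closed (B1 \<union> B2)" by (auto intro: compact_imp_closed)
  define V where "V = - (B1 \<union> B2)"
  have "open V" unfolding V_def using clB by (rule open_Compl)
  moreover have "y0 \<in> V"
  proof -
    have "y0 \<notin> B1" using t(1) unfolding B1_def X1_def by force
    moreover have "y0 \<notin> B2" using t(2) unfolding B2_def X2_def by force
    ultimately show ?thesis unfolding V_def by auto
  qed
  moreover have "\<forall>x\<in>K1. restr C x \<in> V \<longrightarrow> t < f1 x"
    unfolding V_def B1_def by force
  moreover have "\<forall>z\<in>K2. restr C z \<in> V \<longrightarrow> - f2 z < t"
    unfolding V_def B2_def by force
  ultimately show ?thesis by blast
qed

lemma two_block:
  fixes f1 f2 :: "pt \<Rightarrow> real"
  assumes K1: "compact K1" and K2: "compact K2"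
    and c1: "continuous_on UNIV f1" and c2: "continuous_on UNIV f2"
    and pos: "\<forall>x\<in>K1. \<forall>z\<in>K2. restr C x = restr C z \<longrightarrow> f1 x + f2 z > 0"
  shows "\<exists>h\<in>poly_in C. (\<forall>x\<in>K1. f1 x - h x > 0) \<and> (\<forall>z\<in>K2. f2 z + h z > 0)"
proof -
  define Y where "Y = restr C ` (K1 \<union> K2)"
  have cY: "compact Y" unfolding Y_def using K1 K2 by (intro restr_image_compact compact_Un)
  have "\<forall>y\<in>Y. \<exists>tV. open (snd tV) \<and> y \<in> snd tV \<and> (\<forall>x\<in>K1. restr C x \<in> snd tV \<longrightarrow> fst tV < f1 x) \<and>
                (\<forall>z\<in>K2. restr C z \<in> snd tV \<longrightarrow> - f2 z < fst tV)"
    using local_sep[OF K1 K2 c1 c2 pos] by force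
  then obtain tV where tV: "\<And>y. y \<in> Y \<Longrightarrow> open (snd (tV y)) \<and> y \<in> snd (tV y) \<and>
      (\<forall>x\<in>K1. restr C x \<in> snd (tV y) \<longrightarrow> fst (tV y) < f1 x) \<and>
      (\<forall>z\<in>K2. restr C z \<in> snd (tV y) \<longrightarrow> - f2 z < fst (tV y))"
    by metis
  define V where "V y = snd (tV y)" for y
  define t where "t y = fst (tV y)" for y
  obtain T where T: "T \<subseteq> Y" "finite T" "Y \<subseteq> (\<Union>y\<in>T. V y)"
    using compactE_image[OF cY, of Y V] tV unfolding V_def by blast
  define \<psi> where "\<psi> k y = (if - V k = {} then 1 else infdist y (- V k))" for k y
  have psi_cont: "continuous_on UNIV (\<psi> k)" for k
    unfolding \<psi>_def by (cases "- V k = {}") (auto intro: continuous_intros)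
  have psi_nn: "\<psi> k y \<ge> 0" for k y unfolding \<psi>_def by (auto simp: infdist_nonneg)
  have psi_pos: "\<psi> k y > 0 \<longleftrightarrow> y \<in> V k" if "k \<in> Y" for k y
  proof -
    have "closed (- V k)" using tV[OF that] unfolding V_def by (auto intro: closed_Compl)
    then show ?thesis unfolding \<psi>_def
      using infdist_pos_not_in_closed[of "- V k" y] in_closed_iff_infdist_zero[of "- V k" y]
      by (cases "- V k = {}") auto
  qed
  define den where "den y = (\<Sum>k\<in>T. \<psi> k y)" for y
  define \<phi> where "\<phi> y = (\<Sum>k\<in>T. \<psi> k y * t k) / den y" for y
  have den_pos: "den y > 0" if yY0: "y \<in> Y" for y
  proof -
    obtain k where k: "k \<in> T" "y \<in> V k" using T(3) yY0 by auto
    have "\<psi> k y > 0" using psi_pos[of k y] k T(1) by auto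
    then show ?thesis unfolding den_def using T(2) k(1) psi_nn
      by (intro sum_pos2[where i=k]) auto
  qed
  have phi_cont: "continuous_on Y \<phi>"
    unfolding \<phi>_def den_def using den_pos unfolding den_def
    by (intro continuous_on_divide continuous_on_sum continuous_on_mult continuous_on_const
        continuous_on_subset[OF psi_cont]) (auto dest: less_imp_neq[symmetric] simp del: sum_pos2)
  have key1: "\<phi> (restr C x) < f1 x" if "x \<in> K1" for x
  proof -
    let ?y = "restr C x"
    have yY: "?y \<in> Y" unfolding Y_def using that by auto
    have "(\<Sum>k\<in>T. \<psi> k ?y * t k) < (\<Sum>k\<in>T. \<psi> k ?y * f1 x)"
    proof (rule sum_strict_mono_ex1[OF T(2)])
      show "\<forall>k\<in>T. \<psi> k ?y * t k \<le> \<psi> k ?y * f1 x"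
      proof
        fix k assume kT: "k \<in> T"
        show "\<psi> k ?y * t k \<le> \<psi> k ?y * f1 x"
        proof (cases "\<psi> k ?y > 0")
          case True
          then have "?y \<in> V k" using psi_pos kT T(1) by auto
          then have "t k < f1 x" using tV[of k] kT T(1) that unfolding V_def t_def by auto
          then show ?thesis using True by simp
        next
          case False then have "\<psi> k ?y = 0" using psi_nn[of k ?y] by simp
          then show ?thesis by simp
        qed
      qed
      obtain k where k: "k \<in> T" "?y \<in> V k" using T(3) yY by auto
      then have "\<psi> k ?y > 0" using psi_pos T(1) by auto
      moreover have "t k < f1 x" using tV[of k] k T(1) that unfolding V_def t_def by auto
      ultimately show "\<exists>k\<in>T. \<psi> k ?y * t k < \<psi> k ?y * f1 x" using k(1) by (intro bexI[of _ k]) auto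
    qed
    then have "(\<Sum>k\<in>T. \<psi> k ?y * t k) < den ?y * f1 x" unfolding den_def by (simp add: sum_distrib_right)
    then show ?thesis unfolding \<phi>_def using den_pos[OF yY] by (simp add: divide_simps mult.commute)
  qed
  have key2: "- f2 z < \<phi> (restr C z)" if "z \<in> K2" for z
  proof -
    let ?y = "restr C z"
    have yY: "?y \<in> Y" unfolding Y_def using that by auto
    have "(\<Sum>k\<in>T. \<psi> k ?y * (- f2 z)) < (\<Sum>k\<in>T. \<psi> k ?y * t k)"
    proof (rule sum_strict_mono_ex1[OF T(2)])
      show "\<forall>k\<in>T. \<psi> k ?y * (- f2 z) \<le> \<psi> k ?y * t k"
      proof
        fix k assume kT: "k \<in> T"
        show "\<psi> k ?y * (- f2 z) \<le> \<psi> k ?y * t k"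
        proof (cases "\<psi> k ?y > 0")
          case True
          then have "?y \<in> V k" using psi_pos kT T(1) by auto
          then have "- f2 z < t k" using tV[of k] kT T(1) that unfolding V_def t_def by auto
          then show ?thesis using True by (intro mult_left_mono) auto
        next
          case False then have "\<psi> k ?y = 0" using psi_nn[of k ?y] by simp
          then show ?thesis by simp
        qed
      qed
      obtain k where k: "k \<in> T" "?y \<in> V k" using T(3) yY by auto
      then have "\<psi> k ?y > 0" using psi_pos T(1) by auto
      moreover have "- f2 z < t k" using tV[of k] k T(1) that unfolding V_def t_def by auto
      ultimately show "\<exists>k\<in>T. \<psi> k ?y * (- f2 z) < \<psi> k ?y * t k" using k(1) by (intro bexI[of _ k] mult_strict_left_mono) auto
    qed
    then have "den ?y * (- f2 z) < (\<Sum>k\<in>T. \<psi> k ?y * t k)" unfolding den_def by (simp add: sum_distrib_right sum_negf)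
    then show ?thesis unfolding \<phi>_def using den_pos[OF yY] by (simp add: divide_simps mult.commute)
  qed
  have phiK1: "continuous_on K1 (\<lambda>x. \<phi> (restr C x))"
    by (rule continuous_on_compose2[OF phi_cont continuous_on_subset[OF restr_cont]]) (auto simp: Y_def)
  have phiK2: "continuous_on K2 (\<lambda>x. \<phi> (restr C x))"
    by (rule continuous_on_compose2[OF phi_cont continuous_on_subset[OF restr_cont]]) (auto simp: Y_def)
  obtain \<delta>1 where d1: "\<delta>1 > 0" "\<forall>x\<in>K1. \<delta>1 \<le> f1 x - \<phi> (restr C x)"
  proof (cases "K1 = {}")
    case True then show ?thesis using that[of 1] by auto
  next
    case False
    have "continuous_on K1 (\<lambda>x. f1 x - \<phi> (restr C x))"
      by (intro continuous_on_diff continuous_on_subset[OF c1] phiK1) auto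
    then obtain x0 where "x0 \<in> K1" "\<forall>x\<in>K1. f1 x0 - \<phi> (restr C x0) \<le> f1 x - \<phi> (restr C x)"
      using continuous_attains_inf[OF K1 False, of "\<lambda>x. f1 x - \<phi> (restr C x)"] by blast
    then show ?thesis using that[of "f1 x0 - \<phi> (restr C x0)"] key1 by force
  qed
  obtain \<delta>2 where d2: "\<delta>2 > 0" "\<forall>z\<in>K2. \<delta>2 \<le> f2 z + \<phi> (restr C z)"
  proof (cases "K2 = {}")
    case True then show ?thesis using that[of 1] by auto
  next
    case False
    have "continuous_on K2 (\<lambda>x. f2 x + \<phi> (restr C x))"
      by (intro continuous_on_add continuous_on_subset[OF c2] phiK2) auto
    then obtain z0 where "z0 \<in> K2" "\<forall>z\<in>K2. f2 z0 + \<phi> (restr C z0) \<le> f2 z + \<phi> (restr C z)"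
      using continuous_attains_inf[OF K2 False, of "\<lambda>z. f2 z + \<phi> (restr C z)"] by blast
    then show ?thesis using that[of "f2 z0 + \<phi> (restr C z0)"] key2 by force
  qed
  define \<delta> where "\<delta> = min \<delta>1 \<delta>2"
  have dpos: "\<delta> > 0" unfolding \<delta>_def using d1 d2 by simp
  have "\<exists>h. h \<in> poly_in C \<and> (\<forall>y\<in>Y. \<bar>\<phi> y - h y\<bar> < \<delta>)"
  proof (rule Stone_Weierstrass_HOL[OF cY, of "\<lambda>h. h \<in> poly_in C"])
    show "\<And>c. (\<lambda>x. c) \<in> poly_in C" unfolding poly_in_def by (rule alg_gen.const)
    show "\<And>f. f \<in> poly_in C \<Longrightarrow> continuous_on Y f" by (rule poly_cont)
    show "\<And>f g. f \<in> poly_in C \<and> g \<in> poly_in C \<Longrightarrow> (\<lambda>x. f x + g x) \<in> poly_in C"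
      unfolding poly_in_def by (auto intro: alg_gen.add)
    show "\<And>f g. f \<in> poly_in C \<and> g \<in> poly_in C \<Longrightarrow> (\<lambda>x. f x * g x) \<in> poly_in C"
      unfolding poly_in_def by (auto intro: alg_gen.mult)
    show "\<exists>f. f \<in> poly_in C \<and> f x \<noteq> f y" if xy: "x \<in> Y \<and> y \<in> Y \<and> x \<noteq> y" for x y
    proof -
      obtain i where i: "x i \<noteq> y i" using xy by auto
      have "\<forall>w\<in>Y. \<forall>i. i \<notin> C \<longrightarrow> w i = 0" unfolding Y_def restr_def by auto
      then have "i \<in> C" using xy i by metis
      then show ?thesis using i poly_coord[of i C] by auto
    qed
  qed (use phi_cont dpos in auto)
  then obtain h where h: "h \<in> poly_in C" "\<forall>y\<in>Y. \<bar>\<phi> y - h y\<bar> < \<delta>" by blast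
  have "\<forall>x\<in>K1. f1 x - h x > 0"
  proof
    fix x assume x: "x \<in> K1"
    have "restr C x \<in> Y" unfolding Y_def using x by auto
    then have "\<bar>\<phi> (restr C x) - h (restr C x)\<bar> < \<delta>" using h by auto
    moreover have "h (restr C x) = h x" by (rule poly_restr[OF h(1)])
    moreover have "\<delta> \<le> f1 x - \<phi> (restr C x)" using d1 x unfolding \<delta>_def by force
    ultimately show "f1 x - h x > 0" by linarith
  qed
  moreover have "\<forall>z\<in>K2. f2 z + h z > 0"
  proof
    fix z assume z: "z \<in> K2"
    have "restr C z \<in> Y" unfolding Y_def using z by auto
    then have "\<bar>\<phi> (restr C z) - h (restr C z)\<bar> < \<delta>" using h by auto
    moreover have "h (restr C z) = h z" by (rule poly_restr[OF h(1)])
    moreover have "\<delta> \<le> f2 z + \<phi> (restr C z)" using d2 z unfolding \<delta>_def by force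
    ultimately show "f2 z + h z > 0" by linarith
  qed
  ultimately show ?thesis using h(1) by blast
qed



definition Ks :: "(nat \<Rightarrow> nat set) \<Rightarrow> (nat \<Rightarrow> nat set) \<Rightarrow> (nat \<Rightarrow> pt \<Rightarrow> real) \<Rightarrow> nat \<Rightarrow> pt set" where
  "Ks I J g k = {x. (\<forall>i. i \<notin> (\<Union>l\<in>{1..k}. I l) \<longrightarrow> x i = 0) \<and>
                  (\<forall>j\<in>(\<Union>l\<in>{1..k}. J l). 0 \<le> g j x \<and> g j x \<le> 1)}"

lemma closed_set_gen:
  fixes g :: "nat \<Rightarrow> pt \<Rightarrow> real"
  assumes "\<And>j. j \<in> JJ \<Longrightarrow> continuous_on UNIV (g j)"
  shows "closed {x::pt. (\<forall>i. i \<notin> U \<longrightarrow> x i = 0) \<and> (\<forall>j\<in>JJ. 0 \<le> g j x \<and> g j x \<le> 1)}"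
proof -
  have eq: "{x::pt. (\<forall>i. i \<notin> U \<longrightarrow> x i = 0) \<and> (\<forall>j\<in>JJ. 0 \<le> g j x \<and> g j x \<le> 1)} =
      (\<Inter>i\<in>-U. {x. x i = 0}) \<inter> (\<Inter>j\<in>JJ. {x. 0 \<le> g j x} \<inter> {x. g j x \<le> 1})" by auto
  have c1: "closed (\<Inter>i\<in>-U. {x::pt. x i = 0})"
    by (intro closed_INT ballI closed_Collect_eq continuous_on_product_coordinates continuous_on_const)
  have c2: "closed (\<Inter>j\<in>JJ. {x. 0 \<le> g j x} \<inter> {x. g j x \<le> 1})"
  proof (intro closed_INT ballI closed_Int)
    fix j assume j: "j \<in> JJ"
    show "closed {x. 0 \<le> g j x}" using closed_Collect_le[of "\<lambda>x. 0" "g j"] assms[OF j] by auto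
    show "closed {x. g j x \<le> 1}" using closed_Collect_le[of "g j" "\<lambda>x. 1"] assms[OF j] by auto
  qed
  show ?thesis unfolding eq using c1 c2 by (rule closed_Int)
qed

lemma decomp:
  fixes g :: "nat \<Rightarrow> pt \<Rightarrow> real" and I J :: "nat \<Rightarrow> nat set"
  assumes g_loc: "\<forall>l\<in>{1..p}. \<forall>j\<in>J l. g j \<in> poly_in (I l)"
    and RIP: "\<forall>l\<in>{1..p-1}. \<exists>s\<in>{1..l}. I (l+1) \<inter> (\<Union>r\<in>{1..l}. I r) \<subseteq> I s"
    and K_compact: "\<forall>l\<in>{1..p}. compact (K_loc (I l) (J l) g)"
    and bnd: "\<forall>l\<in>{1..p}. \<forall>z\<in>K_loc (I l) (J l) g. \<forall>i. \<bar>z i\<bar> \<le> R"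
    and R0: "0 \<le> R" and k: "1 \<le> k" "k \<le> p"
  shows "\<forall>F. (\<forall>l\<in>{1..k}. F l \<in> poly_in (I l)) \<and> (\<forall>x\<in>Ks I J g k. (\<Sum>l=1..k. F l x) > 0) \<longrightarrow>
    (\<exists>F'. (\<forall>l\<in>{1..k}. F' l \<in> poly_in (I l)) \<and> (\<forall>x. (\<Sum>l=1..k. F' l x) = (\<Sum>l=1..k. F l x)) \<and>
          (\<forall>l\<in>{1..k}. \<forall>x\<in>K_loc (I l) (J l) g. F' l x > 0))"
  using k
proof (induction k)
  case 0 then show ?case by simp
next
  case (Suc k)
  show ?case
  proof (cases "k = 0")
    case True
    have "Ks I J g 1 = K_loc (I 1) (J 1) g" unfolding Ks_def K_loc_def by auto
    then show ?thesis using True by (intro allI impI exI) auto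
  next
    case False
    then have k1: "1 \<le> k" "k \<le> p" "k + 1 \<le> p" using Suc.prems by auto
    note IH = Suc.IH[OF k1(1,2)]
    show ?thesis
    proof (intro allI impI)
      fix F assume F: "(\<forall>l\<in>{1..Suc k}. F l \<in> poly_in (I l)) \<and> (\<forall>x\<in>Ks I J g (Suc k). (\<Sum>l=1..Suc k. F l x) > 0)"
      define A where "A = (\<Union>l\<in>{1..k}. I l)"
      define B where "B = I (k+1)"
      define C where "C = A \<inter> B"
      define f1 where "f1 x = (\<Sum>l=1..k. F l x)" for x
      define f2 where "f2 = F (k+1)"
      have Fl: "F l \<in> poly_in (I l)" if "l \<in> {1..Suc k}" for l using F that by auto
      have f1A: "f1 x = f1 y" if "\<And>i. i \<in> A \<Longrightarrow> x i = y i" for x y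
        unfolding f1_def
      proof (rule sum.cong[OF refl])
        fix l assume l: "l \<in> {1..k}"
        have "\<And>i. i \<in> I l \<Longrightarrow> x i = y i" using l that unfolding A_def by blast
        then show "F l x = F l y" using poly_dep[OF Fl[of l], of x y] l by auto
      qed
      have f2B: "f2 x = f2 y" if "\<And>i. i \<in> B \<Longrightarrow> x i = y i" for x y
        unfolding f2_def using poly_dep[OF Fl[of "k+1"], of x y] that unfolding B_def by auto
      have pcont: "continuous_on UNIV q" if "q \<in> poly_in X" for q X using poly_cont that by blast
      have c1: "continuous_on UNIV f1" unfolding f1_def
      proof (intro continuous_on_sum)
        fix l assume "l \<in> {1..k}"
        then show "continuous_on UNIV (F l)" using pcont[OF Fl[of l]] by auto
      qed
      have c2: "continuous_on UNIV f2" unfolding f2_def using Fl[of "k+1"] pcont by auto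
      have gcont: "continuous_on UNIV (g j)" if "j \<in> (\<Union>l\<in>{1..p}. J l)" for j
        using that g_loc pcont by blast
      have Kcomp: "compact (Ks I J g kk)" if "kk \<le> p" for kk
      proof -
        have cl: "closed (Ks I J g kk)" unfolding Ks_def
        proof (rule closed_set_gen)
          fix j assume "j \<in> (\<Union>l\<in>{1..kk}. J l)"
          then have "j \<in> (\<Union>l\<in>{1..p}. J l)" using \<open>kk \<le> p\<close> by force
          then show "continuous_on UNIV (g j)" by (rule gcont)
        qed
        have sub: "Ks I J g kk \<subseteq> {x. \<forall>i. x i \<in> {-R..R}}"
        proof (intro subsetI CollectI allI)
          fix x i assume x: "x \<in> Ks I J g kk"
          show "x i \<in> {-R..R}"
          proof (cases "i \<in> (\<Union>l\<in>{1..kk}. I l)")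
            case False
            then have "x i = 0" using x unfolding Ks_def by auto
            then show ?thesis using R0 by auto
          next
            case True
            then obtain l where l: "l \<in> {1..kk}" "i \<in> I l" by auto
            have "restr (I l) x \<in> K_loc (I l) (J l) g"
            proof -
              have "g j (restr (I l) x) = g j x" if "j \<in> J l" for j
                using poly_restr[of "g j" "I l" x] g_loc l that \<open>kk \<le> p\<close> by auto
              then show ?thesis using x l unfolding K_loc_def Ks_def restr_def by auto
            qed
            moreover have "l \<in> {1..p}" using l \<open>kk \<le> p\<close> by auto
            ultimately have "\<bar>restr (I l) x i\<bar> \<le> R" using bnd by blast
            then show ?thesis using l by (auto simp: restr_def)
          qed
        qed
        have "compact ({x. \<forall>i. x i \<in> {-R..R}} \<inter> Ks I J g kk)"
          by (intro compact_Int_closed box_compact cl) auto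
        then show ?thesis using sub by (simp add: Int_absorb1)
      qed
      have K2c: "compact (K_loc (I (k+1)) (J (k+1)) g)" using K_compact k1 by auto
      have pos: "\<forall>x\<in>Ks I J g k. \<forall>z\<in>K_loc (I (k+1)) (J (k+1)) g. restr C x = restr C z \<longrightarrow> f1 x + f2 z > 0"
      proof (intro ballI impI)
        fix x z assume x: "x \<in> Ks I J g k" and z: "z \<in> K_loc (I (k+1)) (J (k+1)) g"
          and xz: "restr C x = restr C z"
        define w where "w i = (if i \<in> A then x i else z i)" for i
        have wA: "w i = x i" if "i \<in> A" for i using that unfolding w_def by simp
        have wB: "w i = z i" if "i \<in> B" for i
        proof (cases "i \<in> A")
          case True
          then have "i \<in> C" using that unfolding C_def by auto
          then have "restr C x i = restr C z i" using xz by simp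
          then show ?thesis using \<open>i \<in> C\<close> True unfolding w_def restr_def by simp
        qed (simp add: w_def)
        have part1: "\<forall>i. i \<notin> (\<Union>l\<in>{1..Suc k}. I l) \<longrightarrow> w i = 0"
        proof (intro allI impI)
          fix i assume i: "i \<notin> (\<Union>l\<in>{1..Suc k}. I l)"
          then have "i \<notin> A" "i \<notin> B" unfolding A_def B_def by auto
          then show "w i = 0" using x z unfolding w_def Ks_def K_loc_def A_def B_def by auto
        qed
        have part2: "\<forall>j\<in>(\<Union>l\<in>{1..Suc k}. J l). 0 \<le> g j w \<and> g j w \<le> 1"
        proof
          fix j assume j: "j \<in> (\<Union>l\<in>{1..Suc k}. J l)"
          then obtain l where l: "l \<in> {1..Suc k}" "j \<in> J l" by auto
          show "0 \<le> g j w \<and> g j w \<le> 1"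
          proof (cases "l = Suc k")
            case True
            then have "g j w = g j z" using poly_dep[of "g j" "I (k+1)" w z] g_loc l k1 wB unfolding B_def by auto
            then show ?thesis using z l True unfolding K_loc_def by auto
          next
            case False
            then have l': "l \<in> {1..k}" using l by auto
            have wx: "\<And>i. i \<in> I l \<Longrightarrow> w i = x i" using wA l' unfolding A_def by blast
            have "g j \<in> poly_in (I l)" using g_loc l' l(2) k1 by auto
            then have "g j w = g j x" using poly_dep[of "g j" "I l" w x] wx by blast
            moreover have "j \<in> (\<Union>l\<in>{1..k}. J l)" using l' l by auto
            ultimately show ?thesis using x unfolding Ks_def by auto
          qed
        qed
        have "w \<in> Ks I J g (Suc k)" unfolding Ks_def using part1 part2 by blast
        then have "(\<Sum>l=1..Suc k. F l w) > 0" using F by auto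
        moreover have "(\<Sum>l=1..Suc k. F l w) = f1 w + f2 w" unfolding f1_def f2_def by simp
        moreover have "f1 w = f1 x" by (rule f1A, rule wA)
        moreover have "f2 w = f2 z" by (rule f2B, rule wB)
        ultimately show "f1 x + f2 z > 0" by simp
      qed
      obtain h where h: "h \<in> poly_in C" "\<forall>x\<in>Ks I J g k. f1 x - h x > 0" "\<forall>z\<in>K_loc (I (k+1)) (J (k+1)) g. f2 z + h z > 0"
        using two_block[OF Kcomp[OF k1(2)] K2c c1 c2 pos] by blast
      obtain s where s: "s \<in> {1..k}" "I (k+1) \<inter> (\<Union>r\<in>{1..k}. I r) \<subseteq> I s"
      proof -
        have "k \<in> {1..p-1}" using k1 by auto
        then have "\<exists>s\<in>{1..k}. I (k+1) \<inter> (\<Union>r\<in>{1..k}. I r) \<subseteq> I s" using RIP by blast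
        then show ?thesis using that by blast
      qed
      have hs: "h \<in> poly_in (I s)" using h(1) poly_in_mono[of C "I s"] s unfolding C_def A_def B_def by auto
      define G where "G l = (if l = s then (\<lambda>x. F s x - h x) else F l)" for l
      have Gsum: "(\<Sum>l=1..k. G l x) = f1 x - h x" for x
      proof -
        have "(\<Sum>l=1..k. G l x) = (\<Sum>l=1..k. F l x - (if l = s then h x else 0))"
          unfolding G_def by (rule sum.cong) auto
        also have "\<dots> = f1 x - h x" unfolding f1_def using s by (simp add: sum_subtractf)
        finally show ?thesis .
      qed
      have "(\<forall>l\<in>{1..k}. G l \<in> poly_in (I l)) \<and> (\<forall>x\<in>Ks I J g k. (\<Sum>l=1..k. G l x) > 0)"
      proof
        show "\<forall>l\<in>{1..k}. G l \<in> poly_in (I l)"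
        proof
          fix l assume l: "l \<in> {1..k}"
          show "G l \<in> poly_in (I l)"
          proof (cases "l = s")
            case True
            then show ?thesis unfolding G_def using Fl[of s] hs s unfolding poly_in_def
              by (auto intro: alg_gen_diff)
          next
            case False then show ?thesis unfolding G_def using Fl l by auto
          qed
        qed
        show "\<forall>x\<in>Ks I J g k. (\<Sum>l=1..k. G l x) > 0" using h(2) Gsum by auto
      qed
      then obtain F'' where F'': "\<forall>l\<in>{1..k}. F'' l \<in> poly_in (I l)" "\<forall>x. (\<Sum>l=1..k. F'' l x) = (\<Sum>l=1..k. G l x)"
          "\<forall>l\<in>{1..k}. \<forall>x\<in>K_loc (I l) (J l) g. F'' l x > 0"
        using IH by blast
      define F' where "F' l = (if l = Suc k then (\<lambda>x. F (Suc k) x + h x) else F'' l)" for l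
      have "\<forall>l\<in>{1..Suc k}. F' l \<in> poly_in (I l)"
      proof
        fix l assume l: "l \<in> {1..Suc k}"
        show "F' l \<in> poly_in (I l)"
        proof (cases "l = Suc k")
          case True
          have "h \<in> poly_in (I (Suc k))" using h(1) poly_in_mono[of C "I (Suc k)"] unfolding C_def B_def by auto
          then show ?thesis unfolding F'_def using True Fl[of "Suc k"] unfolding poly_in_def
            by (auto intro: alg_gen.add)
        next
          case False then show ?thesis unfolding F'_def using F''(1) l by auto
        qed
      qed
      moreover have "\<forall>x. (\<Sum>l=1..Suc k. F' l x) = (\<Sum>l=1..Suc k. F l x)"
      proof
        fix x
        have "(\<Sum>l=1..Suc k. F' l x) = (\<Sum>l=1..k. F' l x) + F' (Suc k) x" by simp
        also have "(\<Sum>l=1..k. F' l x) = (\<Sum>l=1..k. F'' l x)" unfolding F'_def by (rule sum.cong) auto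
        also have "\<dots> = f1 x - h x" using F''(2) Gsum by simp
        finally show "(\<Sum>l=1..Suc k. F' l x) = (\<Sum>l=1..Suc k. F l x)"
          unfolding F'_def f1_def by simp
      qed
      moreover have "\<forall>l\<in>{1..Suc k}. \<forall>x\<in>K_loc (I l) (J l) g. F' l x > 0"
      proof (intro ballI)
        fix l x assume l: "l \<in> {1..Suc k}" and x: "x \<in> K_loc (I l) (J l) g"
        show "F' l x > 0"
        proof (cases "l = Suc k")
          case True then show ?thesis using h(3) x unfolding F'_def f2_def by auto
        next
          case False then show ?thesis using F''(3) l x unfolding F'_def by auto
        qed
      qed
      ultimately show "\<exists>F'. (\<forall>l\<in>{1..Suc k}. F' l \<in> poly_in (I l)) \<and>
          (\<forall>x. (\<Sum>l=1..Suc k. F' l x) = (\<Sum>l=1..Suc k. F l x)) \<and>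
          (\<forall>l\<in>{1..Suc k}. \<forall>x\<in>K_loc (I l) (J l) g. F' l x > 0)" by blast
    qed
  qed
qed



theorem mainTheorem1:
  fixes n m p :: nat
    and f :: "pt \<Rightarrow> real"
    and g :: "nat \<Rightarrow> pt \<Rightarrow> real"
    and I J :: "nat \<Rightarrow> nat set"
  assumes p_pos: "p \<ge> 1"
    and I_sub: "\<forall>l\<in>{1..p}. I l \<subseteq> {1..n}"
    and J_sub: "\<forall>l\<in>{1..p}. J l \<subseteq> {1..m}"
    and f_split: "\<exists>F. (\<forall>l\<in>{1..p}. F l \<in> poly_in (I l)) \<and> f = (\<lambda>x. \<Sum>l=1..p. F l x)"
    and g_loc: "\<forall>l\<in>{1..p}. \<forall>j\<in>J l. g j \<in> poly_in (I l)"
    and I_cover: "(\<Union>l\<in>{1..p}. I l) = {1..n}"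
    and J_cover: "(\<Union>l\<in>{1..p}. J l) = {1..m}"
    and RIP: "\<forall>l\<in>{1..p-1}. \<exists>s\<in>{1..l}. I (l+1) \<inter> (\<Union>r\<in>{1..l}. I r) \<subseteq> I s"
    and K_compact: "\<forall>l\<in>{1..p}. compact (K_loc (I l) (J l) g)"
    and generation: "\<forall>l\<in>{1..p}. poly_in (I l) \<subseteq> alg_gen (g ` J l)"
    and f_pos: "\<forall>x\<in>K_glob n m g. f x > 0"
  shows "\<exists>F :: nat \<Rightarrow> pt \<Rightarrow> real. \<exists>c :: nat \<Rightarrow> (nat \<Rightarrow> nat) \<times> (nat \<Rightarrow> nat) \<Rightarrow> real.
           (\<forall>l\<in>{1..p}. F l \<in> poly_in (I l)) \<and>
           f = (\<lambda>x. \<Sum>l=1..p. F l x) \<and>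
           (\<forall>l\<in>{1..p}. \<exists>S. finite S \<and> S \<subseteq> N_set (J l) \<and> (\<forall>ab\<in>S. c l ab > 0) \<and>
               F l = (\<lambda>x. \<Sum>ab\<in>S. c l ab * h_ab m g (fst ab) (snd ab) x))"
proof -
  obtain F0 where F0: "\<forall>l\<in>{1..p}. F0 l \<in> poly_in (I l)" "f = (\<lambda>x. \<Sum>l=1..p. F0 l x)"
    using f_split by blast
  have "\<forall>l\<in>{1..p}. \<forall>i. \<exists>b. \<forall>z\<in>K_loc (I l) (J l) g. \<bar>z i\<bar> \<le> b"
  proof (intro ballI allI)
    fix l i assume l: "l \<in> {1..p}"
    have "compact ((\<lambda>z. z i) ` K_loc (I l) (J l) g)"
      using K_compact l by (intro compact_continuous_image continuous_on_subset[OF continuous_on_product_coordinates]) auto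
    then have "bounded ((\<lambda>z. z i) ` K_loc (I l) (J l) g)" by (rule compact_imp_bounded)
    then show "\<exists>b. \<forall>z\<in>K_loc (I l) (J l) g. \<bar>z i\<bar> \<le> b" unfolding bounded_real by auto
  qed
  then obtain B where B: "\<And>l i z. l \<in> {1..p} \<Longrightarrow> z \<in> K_loc (I l) (J l) g \<Longrightarrow> \<bar>z i\<bar> \<le> B l i"
    by metis
  define R where "R = (\<Sum>l\<in>{1..p}. \<Sum>i\<in>{1..n}. \<bar>B l i\<bar>)"
  have R0: "0 \<le> R" unfolding R_def by (intro sum_nonneg) auto
  have bnd: "\<forall>l\<in>{1..p}. \<forall>z\<in>K_loc (I l) (J l) g. \<forall>i. \<bar>z i\<bar> \<le> R"
  proof (intro ballI allI)
    fix l z i assume l: "l \<in> {1..p}" and z: "z \<in> K_loc (I l) (J l) g"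
    show "\<bar>z i\<bar> \<le> R"
    proof (cases "i \<in> {1..n}")
      case True
      have "\<bar>z i\<bar> \<le> \<bar>B l i\<bar>" using B[OF l z, of i] by simp
      also have "\<dots> \<le> (\<Sum>i\<in>{1..n}. \<bar>B l i\<bar>)" using True by (intro member_le_sum) auto
      also have "\<dots> \<le> R" unfolding R_def using l
        by (intro member_le_sum[of l "{1..p}" "\<lambda>l. \<Sum>i\<in>{1..n}. \<bar>B l i\<bar>"]) (auto intro: sum_nonneg)
      finally show ?thesis .
    next
      case False
      moreover have "I l \<subseteq> {1..n}" using I_sub l by blast
      ultimately have "i \<notin> I l" by blast
      then have "z i = 0" using z unfolding K_loc_def by auto
      then show ?thesis using R0 by simp
    qed
  qed
  have KsK: "Ks I J g p = K_glob n m g" unfolding Ks_def K_glob_def I_cover J_cover by simp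
  obtain F' where F': "\<forall>l\<in>{1..p}. F' l \<in> poly_in (I l)" "\<forall>x. (\<Sum>l=1..p. F' l x) = (\<Sum>l=1..p. F0 l x)"
      "\<forall>l\<in>{1..p}. \<forall>x\<in>K_loc (I l) (J l) g. F' l x > 0"
    using decomp[OF g_loc RIP K_compact bnd R0 p_pos order_refl] F0 f_pos KsK by force
  have "\<forall>l\<in>{1..p}. \<exists>Sc. finite (fst Sc) \<and> fst Sc \<subseteq> N_set (J l) \<and> (\<forall>ab\<in>fst Sc. snd Sc ab > 0) \<and>
           F' l = (\<lambda>x. \<Sum>ab\<in>fst Sc. snd Sc ab * h_ab m g (fst ab) (snd ab) x)"
  proof
    fix l assume l: "l \<in> {1..p}"
    have Jl: "J l \<subseteq> {1..m}" using J_sub l by auto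
    then have "finite (J l)" by (rule finite_subset) auto
    moreover have "\<forall>j\<in>J l. g j \<in> poly_in (I l)" using g_loc l by blast
    moreover have "poly_in (I l) \<subseteq> alg_gen (g ` J l)" using generation l by blast
    moreover have "F' l \<in> poly_in (I l)" using F'(1) l by blast
    moreover have "\<forall>x\<in>K_loc (I l) (J l) g. F' l x > 0" using F'(3) l by blast
    ultimately obtain S c where "finite S \<and> S \<subseteq> N_set (J l) \<and> (\<forall>ab\<in>S. c ab > 0) \<and>
           F' l = (\<lambda>x. \<Sum>ab\<in>S. c ab * h_ab m g (fst ab) (snd ab) x)"
      using dense_local[OF _ Jl, of g "I l" "F' l"] by blast
    then show "\<exists>Sc. finite (fst Sc) \<and> fst Sc \<subseteq> N_set (J l) \<and> (\<forall>ab\<in>fst Sc. snd Sc ab > 0) \<and>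
           F' l = (\<lambda>x. \<Sum>ab\<in>fst Sc. snd Sc ab * h_ab m g (fst ab) (snd ab) x)"
      by (intro exI[of _ "(S, c)"]) simp
  qed
  from bchoice[OF this] obtain Sc where Sc: "\<forall>l\<in>{1..p}. finite (fst (Sc l)) \<and> fst (Sc l) \<subseteq> N_set (J l) \<and> (\<forall>ab\<in>fst (Sc l). snd (Sc l) ab > 0) \<and>
           F' l = (\<lambda>x. \<Sum>ab\<in>fst (Sc l). snd (Sc l) ab * h_ab m g (fst ab) (snd ab) x)"
    by blast
  define c where "c l = snd (Sc l)" for l
  have "f = (\<lambda>x. \<Sum>l=1..p. F' l x)" using F0(2) F'(2) by auto
  moreover have "\<forall>l\<in>{1..p}. \<exists>S. finite S \<and> S \<subseteq> N_set (J l) \<and> (\<forall>ab\<in>S. c l ab > 0) \<and>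
               F' l = (\<lambda>x. \<Sum>ab\<in>S. c l ab * h_ab m g (fst ab) (snd ab) x)"
  proof
    fix l assume l: "l \<in> {1..p}"
    note H = bspec[OF Sc l]
    show "\<exists>S. finite S \<and> S \<subseteq> N_set (J l) \<and> (\<forall>ab\<in>S. c l ab > 0) \<and>
               F' l = (\<lambda>x. \<Sum>ab\<in>S. c l ab * h_ab m g (fst ab) (snd ab) x)"
      unfolding c_def by (rule exI[of _ "fst (Sc l)"]) (rule H)
  qed
  ultimately show ?thesis using F'(1) by (intro exI[of _ F'] exI[of _ c]) simp
qed


end
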